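(* As formal power series in $t$, $$ \sum_{n \ge 0} f^+_n(x) \frac{t^n}{n!} = \frac{e^{xt} - x e^t}{e^{2xt} - x e^{2t}} \quad\text{and}\quad \sum_{n \ge 0} f^-_n(x) \frac{t^n}{n!} = \frac{x\,(e^t - e^{xt})}{e^{2xt} - x e^{2t}}. $$
   Context: A signed permutation of $[n]$ is a set $S = \{a_1, \dots, a_n\}$ with $a_i \in \{i, -i\}$, together with a bijection $w : S \to S$. - $a \in S$ is a $B$-excedance if $w(a) > a$, or if $a < 0$ and $w(a) = a$. - $w$ is a derangement if no $a \in S$ with $a > 0$ has $w(a) = a$. - $d^B_n(x) = \sum_{w \text{ derangement}} x^{\mathrm{exc}_B(w)}$, where $\mathrm{exc}_B(w)$ is the number of $B$-excedances, and $d^B_0 = 1$. - $f^+_n, f^-_n$ are the unique real polynomials with $d^B_n = f^+_n + f^-_n$, $f^+_n(x) = x^n f^+_n(1/x)$ and $f^-_n(x) = x^{n+1} f^-_n(1/x)$. *)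

theory Defs
  imports "HOL-Computational_Algebra.Computational_Algebra"
begin

text \<open>A signed permutation of [n]: a set S = {a_1,...,a_n} with a_i in {i,-i},
  together with a bijection w : S -> S (extended by the identity outside S,
  so that each signed permutation has a unique representative).\<close>
definition signed_perms :: "nat \<Rightarrow> (int set \<times> (int \<Rightarrow> int)) set" where
  "signed_perms n = {(S, w).
     (\<exists>a :: nat \<Rightarrow> int. (\<forall>i\<in>{1..n}. a i = int i \<or> a i = - int i) \<and> S = a ` {1..n})
     \<and> bij_betw w S S \<and> (\<forall>b. b \<notin> S \<longrightarrow> w b = b)}"

definition excB :: "int set \<Rightarrow> (int \<Rightarrow> int) \<Rightarrow> nat" where
  "excB S w = card {a \<in> S. w a > a \<or> (a < 0 \<and> w a = a)}"

definition is_derangementB :: "int set \<Rightarrow> (int \<Rightarrow> int) \<Rightarrow> bool" where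
  "is_derangementB S w \<longleftrightarrow> (\<forall>a\<in>S. a > 0 \<longrightarrow> w a \<noteq> a)"

definition dB :: "nat \<Rightarrow> real poly" where
  "dB n = (if n = 0 then 1 else
     (\<Sum>(S, w) \<in> {(S, w) \<in> signed_perms n. is_derangementB S w}. monom 1 (excB S w)))"

definition fpm :: "nat \<Rightarrow> real poly \<times> real poly" where
  "fpm n = (THE (p, q). dB n = p + q
      \<and> (\<forall>x::real. x \<noteq> 0 \<longrightarrow> poly p x = x ^ n * poly p (1 / x))
      \<and> (\<forall>x::real. x \<noteq> 0 \<longrightarrow> poly q x = x ^ (n + 1) * poly q (1 / x)))"

definition fplus :: "nat \<Rightarrow> real poly" where "fplus n = fst (fpm n)"
definition fminus :: "nat \<Rightarrow> real poly" where "fminus n = snd (fpm n)"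

end

theory Submission
  imports Defs "HOL-Combinatorics.Permutations"
begin


definition signset :: "nat set \<Rightarrow> int set \<Rightarrow> bool" where
  "signset A S \<longleftrightarrow> S \<subseteq> int ` A \<union> uminus ` int ` A \<and> (\<forall>i\<in>A. int i \<in> S \<longleftrightarrow> - int i \<notin> S)"

definition SP :: "nat set \<Rightarrow> (int set \<times> (int \<Rightarrow> int)) set" where
  "SP A = {(S, w). signset A S \<and> w permutes S \<and> (\<forall>a\<in>S. a > 0 \<longrightarrow> w a \<noteq> a)}"

definition exN :: "(int \<Rightarrow> int) \<Rightarrow> int \<Rightarrow> bool" where
  "exN w a \<longleftrightarrow> w a > a \<or> (a < 0 \<and> w a = a)"

lemma excB_exN: "excB S w = card {a\<in>S. exN w a}"
  by (simp add: excB_def exN_def)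

definition DA :: "nat set \<Rightarrow> real poly" where
  "DA A = (\<Sum>(S, w)\<in>SP A. monom (1::real) (excB S w))"

lemma signset_mem:
  assumes "signset A S" "a \<in> S"
  shows "nat \<bar>a\<bar> \<in> A \<and> (a = int (nat \<bar>a\<bar>) \<or> a = - int (nat \<bar>a\<bar>))"
  using assms unfolding signset_def by auto

lemma signset_abs_inj:
  assumes "signset A S" "a \<in> S" "b \<in> S" "\<bar>a\<bar> = \<bar>b\<bar>" "0 \<notin> A"
  shows "a = b"
proof -
  have "nat \<bar>a\<bar> \<in> A" using signset_mem[OF assms(1,2)] by auto
  then have a0: "a \<noteq> 0" using assms(5) by auto
  from assms(4) have "a = b \<or> a = - b" by arith
  moreover have "\<not> (a = -b)"
  proof
    assume ab: "a = -b"
    have "nat \<bar>a\<bar> \<in> A" using signset_mem[OF assms(1,2)] by auto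
    then have e: "int (nat \<bar>a\<bar>) \<in> S \<longleftrightarrow> - int (nat \<bar>a\<bar>) \<notin> S" using assms(1) unfolding signset_def by blast
    show False
    proof (cases "a > 0")
      case True then show ?thesis using e ab assms(2,3) by auto
    next
      case False then show ?thesis using e ab assms(2,3) a0 by auto
    qed
  qed
  ultimately show ?thesis by blast
qed

lemma signset_finite: "finite A \<Longrightarrow> signset A S \<Longrightarrow> finite S"
  unfolding signset_def by (meson finite_Un finite_imageI finite_subset)

lemma signset_card:
  assumes "finite A" "signset A S" "0 \<notin> A"
  shows "card S = card A"
proof -
  have "bij_betw (\<lambda>a. nat \<bar>a\<bar>) S A"
  proof (rule bij_betw_imageI)
    show "inj_on (\<lambda>a. nat \<bar>a\<bar>) S"
      by (rule inj_onI) (metis assms(2,3) signset_abs_inj abs_ge_zero nat_eq_iff2)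
    show "(\<lambda>a. nat \<bar>a\<bar>) ` S = A"
    proof
      show "(\<lambda>a. nat \<bar>a\<bar>) ` S \<subseteq> A" using signset_mem[OF assms(2)] by auto
      show "A \<subseteq> (\<lambda>a. nat \<bar>a\<bar>) ` S"
      proof
        fix i assume i: "i \<in> A"
        then have "int i \<in> S \<or> - int i \<in> S" using assms(2) unfolding signset_def by blast
        then show "i \<in> (\<lambda>a. nat \<bar>a\<bar>) ` S" by (metis (no_types, lifting) abs_minus_cancel image_iff nat_int abs_of_nat)
      qed
    qed
  qed
  then show ?thesis by (simp add: bij_betw_same_card)
qed

lemma SP_finite:
  assumes "finite A" shows "finite (SP A)"
proof -
  let ?U = "int ` A \<union> uminus ` int ` A"
  have "SP A \<subseteq> Sigma (Pow ?U) (\<lambda>S. {w. w permutes S})"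
    unfolding SP_def signset_def by auto
  moreover have "finite (Sigma (Pow ?U) (\<lambda>S. {w. w permutes S}))"
    using assms by (intro finite_SigmaI finite_permutations) (auto intro: finite_subset)
  ultimately show ?thesis by (rule finite_subset)
qed

lemma sum_bij_helper:
  assumes "\<And>a. a \<in> S \<Longrightarrow> i (j a) = a" "\<And>a. a \<in> S \<Longrightarrow> j a \<in> T"
    "\<And>b. b \<in> T \<Longrightarrow> j (i b) = b" "\<And>b. b \<in> T \<Longrightarrow> i b \<in> S"
    "\<And>b. b \<in> T \<Longrightarrow> g (i b) = h b"
  shows "sum g S = sum h T"
  by (rule sum.reindex_bij_witness[of S i j T h g]) (use assms in metis)+

lemma DA_alt: "DA A = (\<Sum>p\<in>SP A. monom (1::real) (excB (fst p) (snd p)))"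
  by (simp add: DA_def case_prod_beta)

lemma monom_Suc_X: "monom (1::real) (Suc k) = [:0,1:] * monom 1 k"
  by (simp add: monom_altdef)

lemma ss_ins_gen:
  assumes "signset B S" "k \<notin> B" "b = int k \<or> b = - int k" "k > 0"
  shows "signset (insert k B) (insert b S)"
proof -
  have nk: "int k \<notin> S" "- int k \<notin> S" "b \<notin> S"
    using assms(1,2,3) signset_mem[OF assms(1)] by (metis nat_int abs_minus_cancel abs_of_nat)+
  show ?thesis unfolding signset_def
  proof (intro conjI ballI)
    show "insert b S \<subseteq> int ` insert k B \<union> uminus ` int ` insert k B" using assms unfolding signset_def by auto
    fix i assume i: "i \<in> insert k B"
    show "(int i \<in> insert b S) = (- int i \<notin> insert b S)"
    proof (cases "i = k")
      case True then show ?thesis using nk assms(3,4) by auto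
    next
      case False
      then have "int i \<noteq> b" "- int i \<noteq> b" using assms(3) by auto
      then show ?thesis using assms(1) i False unfolding signset_def by auto
    qed
  qed
qed

lemma ss_rem_gen:
  assumes ss: "signset B S" and bS: "b \<in> S" and B0: "0 \<notin> B"
  shows "signset (B - {nat \<bar>b\<bar>}) (S - {b})"
proof -
  have other: "x \<in> S \<Longrightarrow> x \<noteq> b \<Longrightarrow> nat \<bar>x\<bar> \<noteq> nat \<bar>b\<bar>" for x
    using signset_abs_inj[OF ss _ bS _ B0] by (metis abs_ge_zero int_nat_eq)
  show ?thesis unfolding signset_def
  proof (intro conjI ballI)
    show "S - {b} \<subseteq> int ` (B - {nat \<bar>b\<bar>}) \<union> uminus ` int ` (B - {nat \<bar>b\<bar>})"
    proof
      fix x assume x: "x \<in> S - {b}"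
      then have "nat \<bar>x\<bar> \<in> B - {nat \<bar>b\<bar>}" using signset_mem[OF ss] other by blast
      moreover have "x = int (nat \<bar>x\<bar>) \<or> x = - int (nat \<bar>x\<bar>)" using signset_mem[OF ss] x by blast
      ultimately show "x \<in> int ` (B - {nat \<bar>b\<bar>}) \<union> uminus ` int ` (B - {nat \<bar>b\<bar>})" by (metis UnI1 UnI2 image_eqI)
    qed
    fix i assume i: "i \<in> B - {nat \<bar>b\<bar>}"
    then have "int i \<noteq> b" "- int i \<noteq> b" by auto
    then show "(int i \<in> S - {b}) = (- int i \<notin> S - {b})" using ss i unfolding signset_def by auto
  qed
qed

lemma inner_sum:
  assumes "finite S"
  shows "(\<Sum>a\<in>S. monom (1::real) (card {x\<in>S. Q x} - (if Q a then 1 else 0) + 1))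
    = of_nat (card {x\<in>S. Q x}) * monom 1 (card {x\<in>S. Q x}) + of_nat (card S - card {x\<in>S. Q x}) * monom 1 (Suc (card {x\<in>S. Q x}))"
proof -
  define E where "E = {x\<in>S. Q x}"
  have finE: "finite E" using assms unfolding E_def by simp
  have sub: "E \<subseteq> S" unfolding E_def by auto
  have "(\<Sum>a\<in>S. monom (1::real) (card E - (if Q a then 1 else 0) + 1))
       = (\<Sum>a\<in>E. monom (1::real) (card E - (if Q a then 1 else 0) + 1)) + (\<Sum>a\<in>S - E. monom (1::real) (card E - (if Q a then 1 else 0) + 1))"
    using sum.subset_diff[OF sub assms] by (simp add: add.commute)
  also have "(\<Sum>a\<in>E. monom (1::real) (card E - (if Q a then 1 else 0) + 1)) = (\<Sum>a\<in>E. monom (1::real) (card E))"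
  proof (rule sum.cong)
    fix a assume a: "a \<in> E"
    then have "card E \<ge> 1" using finE by (metis One_nat_def Suc_leI card_gt_0_iff empty_iff)
    then show "monom (1::real) (card E - (if Q a then 1 else 0) + 1) = monom 1 (card E)" using a unfolding E_def by simp
  qed simp
  also have "(\<Sum>a\<in>S - E. monom (1::real) (card E - (if Q a then 1 else 0) + 1)) = (\<Sum>a\<in>S - E. monom (1::real) (Suc (card E)))"
    by (rule sum.cong) (auto simp: E_def)
  finally show ?thesis using card_Diff_subset[OF finE sub] unfolding E_def[symmetric] by simp
qed

lemma pderiv_sum: "pderiv (sum f A) = (\<Sum>x\<in>A. pderiv (f x))"
  using higher_pderiv_sum[of 1 f A] by simp

lemma inner_poly:
  assumes "e \<le> n"
  shows "2 * (of_nat e * monom (1::real) e + of_nat (n - e) * monom 1 (Suc e))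
     = smult (2 * real n) ([:0,1:] * monom 1 e) + [:0,2,-2:] * pderiv (monom 1 e)"
proof -
  have "poly (2 * (of_nat e * monom (1::real) e + of_nat (n - e) * monom 1 (Suc e))) x
     = poly (smult (2 * real n) ([:0,1:] * monom 1 e) + [:0,2,-2:] * pderiv (monom 1 e)) x" for x
  proof (cases e)
    case 0 then show ?thesis by (simp add: pderiv_monom poly_monom of_nat_diff)
  next
    case (Suc k)
    then show ?thesis using assms by (simp add: pderiv_monom poly_monom of_nat_diff algebra_simps)
  qed
  then show ?thesis using poly_eq_poly_eq_iff by blast
qed

fun P :: "nat \<Rightarrow> real poly" where
  "P 0 = 1"
| "P (Suc 0) = [:0,1:]"
| "P (Suc (Suc n)) = smult (2 * real (Suc n) + 1) ([:0,1:] * P (Suc n)) + [:0,2,-2:] * pderiv (P (Suc n))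
      + smult (2 * real (Suc n)) ([:0,1:] * P n)"

lemma P_rec: "P (Suc n) = smult (2 * real n + 1) ([:0,1:] * P n) + [:0,2,-2:] * pderiv (P n)
      + smult (2 * real n) ([:0,1:] * P (n - 1))"
  by (cases n) simp_all

lemma sum_bool: "(\<Sum>t\<in>T \<times> (UNIV :: bool set). f (fst t)) = (\<Sum>x\<in>T. 2 * f x)"
  for f :: "_ \<Rightarrow> 'b::comm_semiring_1"
proof -
  have "(\<Sum>t\<in>T \<times> (UNIV :: bool set). f (fst t)) = (\<Sum>(x,y)\<in>T \<times> (UNIV :: bool set). f x)"
    by (simp add: case_prod_beta)
  also have "\<dots> = (\<Sum>x\<in>T. \<Sum>y\<in>(UNIV :: bool set). f x)"
    by (rule sum.cartesian_product[symmetric])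
  also have "\<dots> = (\<Sum>x\<in>T. 2 * f x)" by (simp add: UNIV_bool mult_2)
  finally show ?thesis .
qed

lemma sum_Sigma_split: "finite A \<Longrightarrow> (\<forall>x\<in>A. finite (B x)) \<Longrightarrow> (\<Sum>t\<in>Sigma A B. f t) = (\<Sum>x\<in>A. \<Sum>y\<in>B x. f (x,y))"
  using sum.Sigma[of A B "\<lambda>x y. f (x,y)"] by simp

lemma smult_sum2: "smult c (sum f A) = (\<Sum>x\<in>A. smult c (f x))"
  by (induction A rule: infinite_finite_induct) (simp_all add: smult_add_right)

locale remM =
  fixes A :: "nat set" and m :: nat
  assumes fin: "finite A" and A0: "0 \<notin> A" and mA: "m \<in> A" and mmax: "\<And>i. i \<in> A \<Longrightarrow> i \<le> m"
begin

abbreviation "A' \<equiv> A - {m}"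

definition bm :: "int set \<Rightarrow> int" where "bm S = (if int m \<in> S then int m else - int m)"

lemma m_pos: "m > 0" using A0 mA by (cases m) auto

lemma ss_small: "signset A' S' \<Longrightarrow> x \<in> S' \<Longrightarrow> - int m < x \<and> x < int m \<and> x \<noteq> 0"
proof -
  assume "signset A' S'" "x \<in> S'"
  then have h: "nat \<bar>x\<bar> \<in> A'" "x = int (nat \<bar>x\<bar>) \<or> x = - int (nat \<bar>x\<bar>)" using signset_mem by blast+
  then have "nat \<bar>x\<bar> < m" "nat \<bar>x\<bar> \<noteq> 0" using mmax A0 by force+
  then show ?thesis using h(2) by linarith
qed

lemma ss_notm: "signset A' S' \<Longrightarrow> int m \<notin> S' \<and> - int m \<notin> S'"
  using ss_small by fastforce

lemma bm_mem: "signset A S \<Longrightarrow> bm S \<in> S"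
  using mA unfolding signset_def bm_def by auto

lemma bm_abs: "\<bar>bm S\<bar> = int m"
  unfolding bm_def by auto

lemma ss_remove: "signset A S \<Longrightarrow> signset A' (S - {bm S})"
proof -
  assume ss: "signset A S"
  have other: "x \<in> S \<Longrightarrow> x \<noteq> bm S \<Longrightarrow> nat \<bar>x\<bar> \<noteq> m" for x
    using signset_abs_inj[OF ss _ bm_mem[OF ss] _ A0] bm_abs by (metis abs_ge_zero int_nat_eq nat_int)
  show ?thesis unfolding signset_def
  proof (intro conjI ballI)
    show "S - {bm S} \<subseteq> int ` A' \<union> uminus ` int ` A'"
    proof
      fix x assume x: "x \<in> S - {bm S}"
      then have "nat \<bar>x\<bar> \<in> A'" using signset_mem[OF ss] other by blast
      moreover have "x = int (nat \<bar>x\<bar>) \<or> x = - int (nat \<bar>x\<bar>)" using signset_mem[OF ss] x by blast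
      ultimately show "x \<in> int ` A' \<union> uminus ` int ` A'" by (metis UnI1 UnI2 image_eqI)
    qed
    fix i assume i: "i \<in> A'"
    then have "int i \<noteq> bm S" "- int i \<noteq> bm S" using bm_abs by (auto simp: bm_def)
    then show "(int i \<in> S - {bm S}) = (- int i \<notin> S - {bm S})" using ss i unfolding signset_def by auto
  qed
qed

lemma ss_insert: "signset A' S' \<Longrightarrow> b = int m \<or> b = - int m \<Longrightarrow> signset A (insert b S')"
proof -
  assume ss: "signset A' S'" and b: "b = int m \<or> b = - int m"
  show ?thesis unfolding signset_def
  proof (intro conjI ballI)
    show "insert b S' \<subseteq> int ` A \<union> uminus ` int ` A" using ss b mA unfolding signset_def by auto
    fix i assume i: "i \<in> A"
    show "(int i \<in> insert b S') = (- int i \<notin> insert b S')"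
    proof (cases "i = m")
      case True then show ?thesis using ss_notm[OF ss] b m_pos by auto
    next
      case False
      then have "int i \<noteq> b" "- int i \<noteq> b" using b A0 i by auto
      then show ?thesis using ss i False unfolding signset_def by auto
    qed
  qed
qed

lemma bm_insert: "signset A' S' \<Longrightarrow> bm (insert (if s then int m else - int m) S') = (if s then int m else - int m)"
  using ss_notm m_pos unfolding bm_def by auto

lemma case_a:
  "(\<Sum>p\<in>{p\<in>SP A. snd p (bm (fst p)) = bm (fst p)}. monom (1::real) (excB (fst p) (snd p)))
     = (\<Sum>p\<in>SP A'. [:0,1:] * monom (1::real) (excB (fst p) (snd p)))"
proof (rule sum_bij_helper[where i = "\<lambda>(S',w). (insert (- int m) S', w)" and j = "\<lambda>(S,w). (S - {- int m}, w)"])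
  fix p assume p: "p \<in> {p\<in>SP A. snd p (bm (fst p)) = bm (fst p)}"
  obtain S w where pS: "p = (S, w)" by (cases p)
  have ss: "signset A S" and wp: "w permutes S" and der: "\<forall>a\<in>S. a > 0 \<longrightarrow> w a \<noteq> a" and fx: "w (bm S) = bm S"
    using p pS unfolding SP_def by auto
  have bmS: "bm S = - int m" using fx der bm_mem[OF ss] m_pos unfolding bm_def by (auto split: if_splits)
  have mS: "- int m \<in> S" using bm_mem[OF ss] bmS by simp
  show "(\<lambda>(S',w). (insert (- int m) S', w)) ((\<lambda>(S,w). (S - {- int m}, w)) p) = p"
    using pS mS by auto
  have "signset A' (S - {- int m})" using ss_remove[OF ss] bmS by simp
  moreover have "w permutes (S - {- int m})" using wp fx bmS by (intro permutes_superset[OF wp]) auto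
  ultimately show "(\<lambda>(S,w). (S - {- int m}, w)) p \<in> SP A'" using pS der unfolding SP_def by auto
next
  fix q assume q: "q \<in> SP A'"
  obtain S' w where qS: "q = (S', w)" by (cases q)
  have ss: "signset A' S'" and wp: "w permutes S'" and der: "\<forall>a\<in>S'. a > 0 \<longrightarrow> w a \<noteq> a"
    using q qS unfolding SP_def by auto
  have nm: "- int m \<notin> S'" using ss_notm[OF ss] by simp
  show "(\<lambda>(S,w). (S - {- int m}, w)) ((\<lambda>(S',w). (insert (- int m) S', w)) q) = q"
    using qS nm by auto
  have ss2: "signset A (insert (- int m) S')" using ss_insert[OF ss] by simp
  have bm2: "bm (insert (- int m) S') = - int m" using bm_insert[OF ss, of False] by simp
  have wfix: "w (- int m) = - int m" using permutes_not_in[OF wp nm] .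
  have wp2: "w permutes insert (- int m) S'" using permutes_subset[OF wp] by blast
  show "(\<lambda>(S',w). (insert (- int m) S', w)) q \<in> {p\<in>SP A. snd p (bm (fst p)) = bm (fst p)}"
    using qS ss2 bm2 wfix wp2 der m_pos unfolding SP_def by auto
  have fin': "finite S'" using signset_finite[OF _ ss] fin by simp
  have "{a \<in> insert (- int m) S'. exN w a} = insert (- int m) {a \<in> S'. exN w a}"
    using wfix m_pos by (auto simp: exN_def)
  then have "excB (insert (- int m) S') w = Suc (excB S' w)"
    using fin' nm by (simp add: excB_exN)
  then show "monom (1::real) (excB (fst ((\<lambda>(S',w). (insert (- int m) S', w)) q)) (snd ((\<lambda>(S',w). (insert (- int m) S', w)) q)))
     = [:0,1:] * monom (1::real) (excB (fst q) (snd q))"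
    using qS by (simp add: monom_Suc)
qed

abbreviation "bs s \<equiv> (if s then int m else - int m)"

lemma case_c:
  "(\<Sum>p\<in>{p\<in>SP A. snd p (bm (fst p)) \<noteq> bm (fst p) \<and> snd p (snd p (bm (fst p))) = bm (fst p) \<and> snd p (bm (fst p)) > 0}.
        monom (1::real) (excB (fst p) (snd p)))
     = (\<Sum>t\<in>(SIGMA k:A'. SP (A' - {k})) \<times> (UNIV :: bool set). [:0,1:] * monom (1::real) (excB (fst (snd (fst t))) (snd (snd (fst t)))))"
proof (rule sum_bij_helper[where i = "\<lambda>((k,(S'',w'')),s). (insert (bs s) (insert (int k) S''), w'' \<circ> transpose (int k) (bs s))"
      and j = "\<lambda>(S,w). ((nat (w (bm S)), (S - {bm S, w (bm S)}, w \<circ> transpose (w (bm S)) (bm S))), bm S > 0)"])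
  fix p assume p: "p \<in> {p\<in>SP A. snd p (bm (fst p)) \<noteq> bm (fst p) \<and> snd p (snd p (bm (fst p))) = bm (fst p) \<and> snd p (bm (fst p)) > 0}"
  obtain S w where pS: "p = (S, w)" by (cases p)
  define b where "b = bm S"
  define c where "c = w b"
  have ss: "signset A S" and wp: "w permutes S" and der: "\<forall>a\<in>S. a > 0 \<longrightarrow> w a \<noteq> a"
    and cb: "c \<noteq> b" and wc: "w c = b" and cpos: "c > 0"
    using p pS unfolding SP_def b_def c_def by auto
  have bS: "b \<in> S" using bm_mem[OF ss] b_def by simp
  have cS: "c \<in> S" using bS wp c_def by (simp add: permutes_in_image)
  have bbs: "bs (b > 0) = b" using b_def m_pos by (auto simp: bm_def)
  have ic: "int (nat c) = c" using cpos by simp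
  have ww: "w \<circ> transpose c b \<circ> transpose c b = w" by (simp add: comp_assoc)
  show "(\<lambda>((k,(S'',w'')),s). (insert (bs s) (insert (int k) S''), w'' \<circ> transpose (int k) (bs s)))
          ((\<lambda>(S,w). ((nat (w (bm S)), (S - {bm S, w (bm S)}, w \<circ> transpose (w (bm S)) (bm S))), bm S > 0)) p) = p"
    using pS bbs ic bS cS ww by (simp add: b_def[symmetric] c_def[symmetric]) (auto simp: bm_def)
  have ssA': "signset A' (S - {b})" using ss_remove[OF ss] b_def by simp
  have cS': "c \<in> S - {b}" using cS cb by simp
  have nc: "nat \<bar>c\<bar> = nat c" using cpos by simp
  have ssA'': "signset (A' - {nat c}) (S - {b, c})"
    using ss_rem_gen[OF ssA' cS'] A0 nc by (simp add: insert_commute Diff_insert2[symmetric])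
  have ncA: "nat c \<in> A'" using signset_mem[OF ssA' cS'] nc by simp
  define w' where "w' = w \<circ> transpose c b"
  have wpS: "w' permutes S" unfolding w'_def by (rule permutes_compose[OF permutes_swap_id[OF cS bS] wp])
  have w'c: "w' c = c" "w' b = b" using wc c_def unfolding w'_def by auto
  have w'o: "x \<noteq> c \<Longrightarrow> x \<noteq> b \<Longrightarrow> w' x = w x" for x unfolding w'_def by simp
  have wp'': "w' permutes (S - {b, c})" by (rule permutes_superset[OF wpS]) (use w'c in auto)
  have der'': "\<forall>a\<in>S - {b, c}. a > 0 \<longrightarrow> w' a \<noteq> a" using der w'o by auto
  show "(\<lambda>(S,w). ((nat (w (bm S)), (S - {bm S, w (bm S)}, w \<circ> transpose (w (bm S)) (bm S))), bm S > 0)) p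
        \<in> (SIGMA k:A'. SP (A' - {k})) \<times> (UNIV :: bool set)"
    using pS ncA ssA'' wp'' der'' unfolding SP_def by (simp add: b_def[symmetric] c_def[symmetric] w'_def[symmetric])
next
  fix t assume t: "t \<in> (SIGMA k:A'. SP (A' - {k})) \<times> (UNIV :: bool set)"
  obtain k S'' w'' s where tS: "t = ((k,(S'',w'')),s)" by (metis prod.collapse)
  have kA: "k \<in> A'" and ss: "signset (A' - {k}) S''" and wp: "w'' permutes S''"
    and der: "\<forall>a\<in>S''. a > 0 \<longrightarrow> w'' a \<noteq> a" using t tS unfolding SP_def by auto
  have kpos: "k > 0" using kA A0 by (cases k) auto
  define b where "b = bs s"
  have ss1: "signset A' (insert (int k) S'')" using ss_ins_gen[OF ss, of k "int k"] kA kpos by (simp add: insert_absorb)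
  have ss2: "signset A (insert b (insert (int k) S''))" using ss_insert[OF ss1] b_def by auto
  have bmb: "bm (insert b (insert (int k) S'')) = b" using bm_insert[OF ss1] b_def by simp
  have bnot: "b \<notin> insert (int k) S''" using ss_notm[OF ss1] b_def by auto
  have knot: "int k \<notin> S''"
    using ss signset_mem[OF ss] by (metis Diff_iff insertI1 nat_int abs_of_nat)
  have kb: "int k \<noteq> b" using bnot by auto
  have fixk: "w'' (int k) = int k" "w'' b = b" using permutes_not_in[OF wp] knot bnot by auto
  define w where "w = w'' \<circ> transpose (int k) b"
  have wb: "w b = int k" and wk: "w (int k) = b" using fixk kb unfolding w_def by auto
  have wo: "x \<noteq> int k \<Longrightarrow> x \<noteq> b \<Longrightarrow> w x = w'' x" for x unfolding w_def by simp
  have ww: "w \<circ> transpose (int k) b = w''" unfolding w_def by (simp add: comp_assoc)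
  have bpos: "(b > 0) = s" using b_def m_pos by auto
  have setq: "insert b (insert (int k) S'') - {b, int k} = S''" using knot bnot by auto
  show "(\<lambda>(S,w). ((nat (w (bm S)), (S - {bm S, w (bm S)}, w \<circ> transpose (w (bm S)) (bm S))), bm S > 0))
          ((\<lambda>((k,(S'',w'')),s). (insert (bs s) (insert (int k) S''), w'' \<circ> transpose (int k) (bs s))) t) = t"
    using tS bmb wb ww bpos setq by (simp add: b_def[symmetric] w_def[symmetric])
  have wpA: "w permutes insert b (insert (int k) S'')" unfolding w_def
    by (rule permutes_compose[OF permutes_swap_id permutes_subset[OF wp]]) auto
  have derA: "\<forall>a\<in>insert b (insert (int k) S''). a > 0 \<longrightarrow> w a \<noteq> a"
  proof (intro ballI impI)
    fix a assume a: "a \<in> insert b (insert (int k) S'')" "a > 0"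
    show "w a \<noteq> a"
    proof (cases "a = b \<or> a = int k")
      case True then show ?thesis using wb wk kb by auto
    next
      case False then have "a \<in> S''" "w a = w'' a" using a wo by auto
      then show ?thesis using der a by auto
    qed
  qed
  have inSP: "(insert b (insert (int k) S''), w) \<in> SP A" using ss2 wpA derA unfolding SP_def by simp
  show "(\<lambda>((k,(S'',w'')),s). (insert (bs s) (insert (int k) S''), w'' \<circ> transpose (int k) (bs s))) t
         \<in> {p\<in>SP A. snd p (bm (fst p)) \<noteq> bm (fst p) \<and> snd p (snd p (bm (fst p))) = bm (fst p) \<and> snd p (bm (fst p)) > 0}"
    using tS inSP bmb wb wk kb kpos by (simp add: b_def[symmetric] w_def[symmetric])
  have fin'': "finite S''" using signset_finite[OF _ ss] fin by simp
  have exo: "x \<in> S'' \<Longrightarrow> exN w x = exN w'' x" for x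
  proof -
    assume "x \<in> S''"
    then have "x \<noteq> int k" "x \<noteq> b" using knot bnot by auto
    then have "w x = w'' x" by (rule wo)
    then show ?thesis by (simp add: exN_def)
  qed
  have exb: "exN w b \<longleftrightarrow> b < 0" and exk: "exN w (int k) \<longleftrightarrow> b > 0"
  proof -
    have "k \<le> m" "k \<noteq> m" using kA mmax by auto
    then have "k < m" by simp
    then show "exN w b \<longleftrightarrow> b < 0" "exN w (int k) \<longleftrightarrow> b > 0"
      using wb wk b_def kpos m_pos by (auto simp: exN_def)
  qed
  have "{a \<in> insert b (insert (int k) S''). exN w a} = insert (if b > 0 then int k else b) {a \<in> S''. exN w'' a}"
    using exo exb exk b_def m_pos by auto
  moreover have "(if b > 0 then int k else b) \<notin> S''" using knot bnot by auto
  ultimately have "excB (insert b (insert (int k) S'')) w = Suc (excB S'' w'')"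
    using fin'' by (simp add: excB_exN)
  then show "monom (1::real) (excB (fst ((\<lambda>((k,(S'',w'')),s). (insert (bs s) (insert (int k) S''), w'' \<circ> transpose (int k) (bs s))) t))
          (snd ((\<lambda>((k,(S'',w'')),s). (insert (bs s) (insert (int k) S''), w'' \<circ> transpose (int k) (bs s))) t)))
     = [:0,1:] * monom (1::real) (excB (fst (snd (fst t))) (snd (snd (fst t))))"
    using tS by (simp add: b_def[symmetric] w_def[symmetric] monom_Suc)
qed

lemma case_b:
  "(\<Sum>p\<in>{p\<in>SP A. snd p (bm (fst p)) \<noteq> bm (fst p) \<and> \<not> (snd p (snd p (bm (fst p))) = bm (fst p) \<and> snd p (bm (fst p)) > 0)}.
        monom (1::real) (excB (fst p) (snd p)))
     = (\<Sum>t\<in>(SIGMA q:SP A'. fst q \<times> (UNIV :: bool set)).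
           monom (1::real) (excB (fst (fst t)) (snd (fst t)) - (if exN (snd (fst t)) (fst (snd t)) then 1 else 0) + 1))"
proof (rule sum_bij_helper[where i = "\<lambda>((S',w'),(a,s)). (insert (bs s) S', w' \<circ> transpose a (bs s))"
      and j = "\<lambda>(S,w). ((S - {bm S}, w \<circ> transpose (inv w (bm S)) (bm S)), (inv w (bm S), bm S > 0))"])
  fix p assume p: "p \<in> {p\<in>SP A. snd p (bm (fst p)) \<noteq> bm (fst p) \<and> \<not> (snd p (snd p (bm (fst p))) = bm (fst p) \<and> snd p (bm (fst p)) > 0)}"
  obtain S w where pS: "p = (S, w)" by (cases p)
  define b where "b = bm S"
  define a where "a = inv w b"
  have ss: "signset A S" and wp: "w permutes S" and der: "\<forall>x\<in>S. x > 0 \<longrightarrow> w x \<noteq> x"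
    and wb: "w b \<noteq> b" and nc: "\<not> (w (w b) = b \<and> w b > 0)"
    using p pS unfolding SP_def b_def by auto
  have bS: "b \<in> S" using bm_mem[OF ss] b_def by simp
  have wa: "w a = b" unfolding a_def using permutes_inverses(1)[OF wp] .
  have aS: "a \<in> S" using wa bS wp by (metis permutes_in_image)
  have ab: "a \<noteq> b" using wa wb by auto
  have bbs: "bs (b > 0) = b" using b_def m_pos by (auto simp: bm_def)
  have ww: "w \<circ> transpose a b \<circ> transpose a b = w" by (simp add: comp_assoc)
  show "(\<lambda>((S',w'),(a,s)). (insert (bs s) S', w' \<circ> transpose a (bs s)))
          ((\<lambda>(S,w). ((S - {bm S}, w \<circ> transpose (inv w (bm S)) (bm S)), (inv w (bm S), bm S > 0))) p) = p"
    using pS bbs bS ww by (simp add: b_def[symmetric] a_def[symmetric] insert_absorb)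
  have ssA': "signset A' (S - {b})" using ss_remove[OF ss] b_def by simp
  define w' where "w' = w \<circ> transpose a b"
  have wpS: "w' permutes S" unfolding w'_def by (rule permutes_compose[OF permutes_swap_id[OF aS bS] wp])
  have w'b: "w' b = b" "w' a = w b" using wa ab unfolding w'_def by auto
  have w'o: "x \<noteq> a \<Longrightarrow> x \<noteq> b \<Longrightarrow> w' x = w x" for x unfolding w'_def by simp
  have wp': "w' permutes (S - {b})" by (rule permutes_superset[OF wpS]) (use w'b in auto)
  have der': "\<forall>x\<in>S - {b}. x > 0 \<longrightarrow> w' x \<noteq> x"
  proof (intro ballI impI)
    fix x assume x: "x \<in> S - {b}" "x > 0"
    show "w' x \<noteq> x"
    proof (cases "x = a")
      case True
      show ?thesis
      proof
        assume "w' x = x"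
        then have "w b = a" using True w'b by simp
        then show False using nc wa x True by auto
      qed
    next
      case False then show ?thesis using w'o der x by auto
    qed
  qed
  show "(\<lambda>(S,w). ((S - {bm S}, w \<circ> transpose (inv w (bm S)) (bm S)), (inv w (bm S), bm S > 0))) p
        \<in> (SIGMA q:SP A'. fst q \<times> (UNIV :: bool set))"
    using pS ssA' wp' der' aS ab unfolding SP_def by (simp add: b_def[symmetric] a_def[symmetric] w'_def[symmetric])
next
  fix t assume t: "t \<in> (SIGMA q:SP A'. fst q \<times> (UNIV :: bool set))"
  obtain S' w' a s where tS: "t = ((S',w'),(a,s))" by (metis prod.collapse)
  have ss: "signset A' S'" and wp: "w' permutes S'" and der: "\<forall>x\<in>S'. x > 0 \<longrightarrow> w' x \<noteq> x" and aS: "a \<in> S'"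
    using t tS unfolding SP_def by auto
  define b where "b = bs s"
  have ss2: "signset A (insert b S')" using ss_insert[OF ss] b_def by auto
  have bmb: "bm (insert b S') = b" using bm_insert[OF ss] b_def by simp
  have bnot: "b \<notin> S'" using ss_notm[OF ss] b_def by auto
  have ab: "a \<noteq> b" using aS bnot by auto
  have fixb: "w' b = b" using permutes_not_in[OF wp] bnot by auto
  define w where "w = w' \<circ> transpose a b"
  have wa: "w a = b" and wb: "w b = w' a" using fixb ab unfolding w_def by auto
  have wo: "x \<noteq> a \<Longrightarrow> x \<noteq> b \<Longrightarrow> w x = w' x" for x unfolding w_def by simp
  have ww: "w \<circ> transpose a b = w'" unfolding w_def by (simp add: comp_assoc)
  have bpos: "(b > 0) = s" using b_def m_pos by auto
  have wpA: "w permutes insert b S'" unfolding w_def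
    by (rule permutes_compose[OF permutes_swap_id permutes_subset[OF wp]]) (use aS in auto)
  have inva: "inv w b = a" using wa permutes_inv_eq[OF wpA] by simp
  have setq: "insert b S' - {b} = S'" using bnot by auto
  show "(\<lambda>(S,w). ((S - {bm S}, w \<circ> transpose (inv w (bm S)) (bm S)), (inv w (bm S), bm S > 0)))
          ((\<lambda>((S',w'),(a,s)). (insert (bs s) S', w' \<circ> transpose a (bs s))) t) = t"
    using tS bmb inva ww bpos setq by (simp add: b_def[symmetric] w_def[symmetric])
  have w'aS: "w' a \<in> S'" using aS wp by (simp add: permutes_in_image)
  have derA: "\<forall>x\<in>insert b S'. x > 0 \<longrightarrow> w x \<noteq> x"
  proof (intro ballI impI)
    fix x assume x: "x \<in> insert b S'" "x > 0"
    show "w x \<noteq> x"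
    proof (cases "x = b \<or> x = a")
      case True then show ?thesis using wa wb w'aS bnot ab by auto
    next
      case False then have "x \<in> S'" "w x = w' x" using x wo by auto
      then show ?thesis using der x by auto
    qed
  qed
  have inSP: "(insert b S', w) \<in> SP A" using ss2 wpA derA unfolding SP_def by simp
  have c1: "w b \<noteq> b" using wb w'aS bnot by auto
  have c2: "\<not> (w (w b) = b \<and> w b > 0)"
  proof
    assume h: "w (w b) = b \<and> w b > 0"
    then have "w (w b) = w a" using wa by simp
    then have "w b = a" using permutes_inj[OF wpA] by (meson injD)
    then have "w' a = a" "a > 0" using wb h by auto
    then show False using der aS by auto
  qed
  show "(\<lambda>((S',w'),(a,s)). (insert (bs s) S', w' \<circ> transpose a (bs s))) t
         \<in> {p\<in>SP A. snd p (bm (fst p)) \<noteq> bm (fst p) \<and> \<not> (snd p (snd p (bm (fst p))) = bm (fst p) \<and> snd p (bm (fst p)) > 0)}"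
    using tS inSP bmb c1 c2 by (simp add: b_def[symmetric] w_def[symmetric])
  have fin': "finite S'" using signset_finite[OF _ ss] fin by simp
  have exo: "x \<in> S' - {a} \<Longrightarrow> exN w x = exN w' x" for x
  proof -
    assume "x \<in> S' - {a}"
    then have "x \<noteq> a" "x \<noteq> b" using bnot by auto
    then have "w x = w' x" by (rule wo)
    then show ?thesis by (simp add: exN_def)
  qed
  have sa: "- int m < a \<and> a < int m" and sc: "- int m < w' a \<and> w' a < int m" using ss_small[OF ss] aS w'aS by auto
  have exb: "exN w b \<longleftrightarrow> b < 0" and exa: "exN w a \<longleftrightarrow> b > 0"
    using wa wb sa sc b_def m_pos by (auto simp: exN_def)
  define E0 where "E0 = {x \<in> S' - {a}. exN w' x}"
  have finE0: "finite E0" using fin' unfolding E0_def by simp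
  have "{x \<in> insert b S'. exN w x} = insert (if b > 0 then a else b) E0"
    using exo exb exa b_def m_pos ab aS unfolding E0_def by auto
  moreover have "(if b > 0 then a else b) \<notin> E0" using bnot unfolding E0_def by auto
  ultimately have e1: "excB (insert b S') w = Suc (card E0)"
    using finE0 by (simp add: excB_exN)
  have "{x \<in> S'. exN w' x} = (if exN w' a then insert a E0 else E0)"
    using aS unfolding E0_def by auto
  then have e2: "excB S' w' = card E0 + (if exN w' a then 1 else 0)"
    using finE0 by (simp add: excB_exN E0_def)
  show "monom (1::real) (excB (fst ((\<lambda>((S',w'),(a,s)). (insert (bs s) S', w' \<circ> transpose a (bs s))) t))
          (snd ((\<lambda>((S',w'),(a,s)). (insert (bs s) S', w' \<circ> transpose a (bs s))) t)))
     = monom (1::real) (excB (fst (fst t)) (snd (fst t)) - (if exN (snd (fst t)) (fst (snd t)) then 1 else 0) + 1)"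
    using tS e1 e2 by (simp add: b_def[symmetric] w_def[symmetric])
qed

end


lemma SP_empty: "SP {} = {({}, id)}"
  unfolding SP_def signset_def by (auto simp: permutes_empty)

theorem DA_P: "finite A \<Longrightarrow> 0 \<notin> A \<Longrightarrow> DA A = P (card A)"
proof (induction "card A" arbitrary: A rule: less_induct)
  case less
  show ?case
  proof (cases "A = {}")
    case True
    then show ?thesis by (simp add: DA_def SP_empty excB_def)
  next
    case False
    define m where "m = Max A"
    interpret remM A m
      using less.prems False Max_in Max_ge unfolding m_def by unfold_locales auto
    define n' where "n' = card A'"
    have cA: "card A = Suc n'" using fin mA unfolding n'_def by (metis card_Suc_Diff1)
    have finA': "finite A'" using fin by simp
    have IH: "\<And>B. B \<subseteq> A' \<Longrightarrow> DA B = P (card B)"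
    proof -
      fix B assume B: "B \<subseteq> A'"
      have "card B \<le> n'" using B finA' unfolding n'_def by (simp add: card_mono)
      then have "card B < card A" using cA by simp
      moreover have "finite B" "0 \<notin> B" using B fin A0 by (auto intro: finite_subset)
      ultimately show "DA B = P (card B)" using less.hyps by blast
    qed
    define g where "g = (\<lambda>p. monom (1::real) (excB (fst p) (snd p)))"
    define Sa where "Sa = {p\<in>SP A. snd p (bm (fst p)) = bm (fst p)}"
    define Sb where "Sb = {p\<in>SP A. snd p (bm (fst p)) \<noteq> bm (fst p) \<and> \<not> (snd p (snd p (bm (fst p))) = bm (fst p) \<and> snd p (bm (fst p)) > 0)}"
    define Sc where "Sc = {p\<in>SP A. snd p (bm (fst p)) \<noteq> bm (fst p) \<and> snd p (snd p (bm (fst p))) = bm (fst p) \<and> snd p (bm (fst p)) > 0}"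
    have finSP: "finite (SP A)" using SP_finite fin by simp
    have "SP A = Sa \<union> (Sb \<union> Sc)" unfolding Sa_def Sb_def Sc_def by blast
    moreover have "Sa \<inter> (Sb \<union> Sc) = {}" "Sb \<inter> Sc = {}" unfolding Sa_def Sb_def Sc_def by blast+
    moreover have "finite Sa" "finite Sb" "finite Sc" using finSP unfolding Sa_def Sb_def Sc_def by simp_all
    ultimately have split: "DA A = sum g Sa + sum g Sb + sum g Sc"
      unfolding DA_alt g_def[symmetric] by (simp add: sum.union_disjoint add.assoc)
    have a: "sum g Sa = [:0,1:] * P n'"
    proof -
      have "sum g Sa = (\<Sum>p\<in>SP A'. [:0,1:] * monom (1::real) (excB (fst p) (snd p)))"
        using case_a unfolding g_def Sa_def .
      also have "\<dots> = [:0,1:] * DA A'" by (simp only: DA_alt sum_distrib_left)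
      finally show ?thesis using IH[of A'] unfolding n'_def by simp
    qed
    have c: "sum g Sc = of_nat n' * (2 * ([:0,1:] * P (n' - 1)))"
    proof -
      have "sum g Sc = (\<Sum>u\<in>(SIGMA k:A'. SP (A' - {k})). 2 * ([:0,1:] * monom (1::real) (excB (fst (snd u)) (snd (snd u)))))"
        using case_c sum_bool[of "\<lambda>u. [:0,1:] * monom (1::real) (excB (fst (snd u)) (snd (snd u)))"]
        unfolding g_def Sc_def by simp
      also have "\<dots> = (\<Sum>k\<in>A'. \<Sum>p\<in>SP (A' - {k}). 2 * ([:0,1:] * monom (1::real) (excB (fst p) (snd p))))"
        using finA' by (subst sum_Sigma_split) (auto intro: SP_finite)
      also have "\<dots> = (\<Sum>k\<in>A'. 2 * ([:0,1:] * DA (A' - {k})))"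
        by (simp add: DA_alt sum_distrib_left)
      also have "\<dots> = (\<Sum>k\<in>A'. 2 * ([:0,1:] * P (n' - 1)))"
      proof (rule sum.cong)
        fix k assume "k \<in> A'"
        then have "card (A' - {k}) = n' - 1" using finA' unfolding n'_def by simp
        then show "2 * ([:0,1:] * DA (A' - {k})) = 2 * ([:0,1:] * P (n' - 1))" using IH[of "A' - {k}"] by auto
      qed simp
      finally show ?thesis unfolding n'_def by simp
    qed
    have b: "sum g Sb = smult (2 * real n') ([:0,1:] * P n') + [:0,2,-2:] * pderiv (P n')"
    proof -
      have "sum g Sb = (\<Sum>t\<in>(SIGMA q:SP A'. fst q \<times> (UNIV :: bool set)).
           monom (1::real) (excB (fst (fst t)) (snd (fst t)) - (if exN (snd (fst t)) (fst (snd t)) then 1 else 0) + 1))"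
        using case_b unfolding g_def Sb_def by simp
      also have "\<dots> = (\<Sum>q\<in>SP A'. \<Sum>r\<in>fst q \<times> (UNIV :: bool set).
           monom (1::real) (excB (fst q) (snd q) - (if exN (snd q) (fst r) then 1 else 0) + 1))"
      proof -
        have f1: "finite (SP A')" using SP_finite finA' by simp
        have f2: "\<forall>q\<in>SP A'. finite (fst q \<times> (UNIV :: bool set))"
          using signset_finite[OF finA'] unfolding SP_def by auto
        show ?thesis by (subst sum_Sigma_split[OF f1 f2]) simp
      qed
      also have "\<dots> = (\<Sum>q\<in>SP A'. smult (2 * real n') ([:0,1:] * monom 1 (excB (fst q) (snd q))) + [:0,2,-2:] * pderiv (monom 1 (excB (fst q) (snd q))))"
      proof (rule sum.cong)
        fix q assume q: "q \<in> SP A'"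
        obtain S w where qS: "q = (S, w)" by (cases q)
        have ss: "signset A' S" using q qS unfolding SP_def by auto
        have finS: "finite S" using signset_finite[OF finA' ss] .
        have A0': "0 \<notin> A'" using A0 by simp
        have cS: "card S = n'" unfolding n'_def by (rule signset_card[OF finA' ss A0'])
        have "card {a\<in>S. exN w a} \<le> card S" by (rule card_mono[OF finS]) auto
        then have le: "excB S w \<le> n'" using cS unfolding excB_exN by simp
        have "(\<Sum>r\<in>S \<times> (UNIV :: bool set). monom (1::real) (excB S w - (if exN w (fst r) then 1 else 0) + 1))
            = (\<Sum>a\<in>S. 2 * monom (1::real) (excB S w - (if exN w a then 1 else 0) + 1))"
          by (rule sum_bool)
        also have "\<dots> = 2 * (\<Sum>a\<in>S. monom (1::real) (excB S w - (if exN w a then 1 else 0) + 1))"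
          by (simp add: sum_distrib_left)
        also have "\<dots> = 2 * (of_nat (excB S w) * monom 1 (excB S w) + of_nat (n' - excB S w) * monom 1 (Suc (excB S w)))"
          using inner_sum[OF finS, of "exN w"] cS unfolding excB_exN by simp
        also have "\<dots> = smult (2 * real n') ([:0,1:] * monom 1 (excB S w)) + [:0,2,-2:] * pderiv (monom 1 (excB S w))"
          by (rule inner_poly[OF le])
        finally show "(\<Sum>r\<in>fst q \<times> (UNIV :: bool set). monom (1::real) (excB (fst q) (snd q) - (if exN (snd q) (fst r) then 1 else 0) + 1))
           = smult (2 * real n') ([:0,1:] * monom 1 (excB (fst q) (snd q))) + [:0,2,-2:] * pderiv (monom 1 (excB (fst q) (snd q)))"
          using qS by simp
      qed simp
      also have "\<dots> = smult (2 * real n') ([:0,1:] * DA A') + [:0,2,-2:] * pderiv (DA A')"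
        by (simp only: DA_alt sum.distrib pderiv_sum sum_distrib_left smult_sum2)
      finally show ?thesis using IH[of A'] unfolding n'_def by simp
    qed
    have "DA A = [:0,1:] * P n' + (smult (2 * real n') ([:0,1:] * P n') + [:0,2,-2:] * pderiv (P n'))
        + of_nat n' * (2 * ([:0,1:] * P (n' - 1)))"
      using split a b c by simp
    also have "\<dots> = P (Suc n')"
      by (rule poly_ext) (simp add: P_rec algebra_simps)
    finally show ?thesis using cA by simp
  qed
qed


lemma signset_iff:
  assumes "0 \<notin> A"
  shows "(\<exists>a :: nat \<Rightarrow> int. (\<forall>i\<in>A. a i = int i \<or> a i = - int i) \<and> S = a ` A) \<longleftrightarrow> signset A S"
proof
  assume "\<exists>a :: nat \<Rightarrow> int. (\<forall>i\<in>A. a i = int i \<or> a i = - int i) \<and> S = a ` A"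
  then obtain a :: "nat \<Rightarrow> int" where a: "\<forall>i\<in>A. a i = int i \<or> a i = - int i" and S: "S = a ` A" by blast
  show "signset A S" unfolding signset_def
  proof (intro conjI ballI)
    show "S \<subseteq> int ` A \<union> uminus ` int ` A" using a S by auto
    fix i assume i: "i \<in> A"
    have ipos: "i > 0" using i assms by (cases i) auto
    have uniq: "j \<in> A \<Longrightarrow> a j = int i \<or> a j = - int i \<Longrightarrow> j = i" for j using a by force
    show "(int i \<in> S) = (- int i \<notin> S)"
    proof
      assume "int i \<in> S"
      then obtain j where "j \<in> A" "a j = int i" using S by auto
      then have "a i = int i" using uniq by blast
      then show "- int i \<notin> S" using S uniq ipos by force
    next
      assume "- int i \<notin> S"
      then have "a i \<noteq> - int i" using S i by (metis image_eqI)
      then show "int i \<in> S" using a S i by force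
    qed
  qed
next
  assume ss: "signset A S"
  define a where "a = (\<lambda>i::nat. if int i \<in> S then int i else - int i)"
  have "(\<forall>i\<in>A. a i = int i \<or> a i = - int i)" unfolding a_def by auto
  moreover have "S = a ` A"
  proof
    show "S \<subseteq> a ` A"
    proof
      fix x assume x: "x \<in> S"
      then have "nat \<bar>x\<bar> \<in> A" "x = int (nat \<bar>x\<bar>) \<or> x = - int (nat \<bar>x\<bar>)" using signset_mem[OF ss] by blast+
      moreover have "x = a (nat \<bar>x\<bar>)" using calculation ss x unfolding a_def signset_def by (metis (no_types, lifting))
      ultimately show "x \<in> a ` A" by blast
    qed
    show "a ` A \<subseteq> S" using ss unfolding a_def signset_def by auto
  qed
  ultimately show "\<exists>a :: nat \<Rightarrow> int. (\<forall>i\<in>A. a i = int i \<or> a i = - int i) \<and> S = a ` A" by blast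
qed

lemma dersets_eq: "{(S, w) \<in> signed_perms n. is_derangementB S w} = SP {1..n}"
proof -
  have p: "(bij_betw w S S \<and> (\<forall>b. b \<notin> S \<longrightarrow> w b = b)) \<longleftrightarrow> w permutes S" for w :: "int \<Rightarrow> int" and S
    using bij_imp_permutes permutes_imp_bij permutes_not_in by metis
  have z: "(0::nat) \<notin> {1..n}" by simp
  show ?thesis unfolding signed_perms_def SP_def is_derangementB_def signset_iff[OF z] p by auto
qed

theorem dB_P: "dB n = P n"
proof (cases "n = 0")
  case True then show ?thesis by (simp add: dB_def)
next
  case False
  have "dB n = DA {1..n}" using False unfolding dB_def DA_def dersets_eq by simp
  also have "\<dots> = P n" using DA_P[of "{1..n}"] by simp
  finally show ?thesis .
qed



definition Dx :: "real poly fps \<Rightarrow> real poly fps" where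
  "Dx F = Abs_fps (\<lambda>n. pderiv (F $ n))"

definition K :: "real poly" where "K = [:0,2,-2:]"

definition M :: "real poly fps \<Rightarrow> real poly fps" where
  "M F = fps_deriv F - fps_const [:0,2:] * (fps_X * fps_deriv F) - fps_const K * Dx F"

definition ex :: "real poly \<Rightarrow> real poly fps" where
  "ex c = Abs_fps (\<lambda>n. smult (1 / fact n) (c ^ n))"

abbreviation Y :: "real poly fps" where "Y \<equiv> fps_const [:0,1:]"

lemma Dx_nth [simp]: "Dx F $ n = pderiv (F $ n)" by (simp add: Dx_def)

lemma Dx_add: "Dx (F + G) = Dx F + Dx G" by (simp add: fps_eq_iff pderiv_add)
lemma Dx_diff: "Dx (F - G) = Dx F - Dx G" by (simp add: fps_eq_iff pderiv_diff)
lemma Dx_const: "Dx (fps_const c) = fps_const (pderiv c)"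
  by (simp add: fps_eq_iff)
lemma Dx_mult: "Dx (F * G) = Dx F * G + F * Dx G"
proof (rule fps_ext)
  fix n
  have "Dx (F * G) $ n = (\<Sum>i=0..n. pderiv (F $ i * G $ (n - i)))" by (simp add: fps_mult_nth pderiv_sum)
  also have "\<dots> = (\<Sum>i=0..n. pderiv (F $ i) * G $ (n - i) + F $ i * pderiv (G $ (n - i)))"
    by (rule sum.cong) (simp_all add: pderiv_mult algebra_simps)
  also have "\<dots> = (Dx F * G + F * Dx G) $ n" by (simp add: fps_mult_nth sum.distrib)
  finally show "Dx (F * G) $ n = (Dx F * G + F * Dx G) $ n" .
qed

lemma M_add: "M (F + G) = M F + M G" by (simp add: M_def Dx_add algebra_simps)
lemma M_diff: "M (F - G) = M F - M G" by (simp add: M_def Dx_diff algebra_simps)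
lemma M_mult: "M (F * G) = M F * G + F * M G" by (simp add: M_def Dx_mult algebra_simps)
lemma M_const: "M (fps_const c) = - fps_const (K * pderiv c)" by (simp add: M_def Dx_const)

lemma ofnat_mult_poly: "of_nat k * (p :: real poly) = smult (of_nat k) p"
  by (rule poly_ext) simp

lemma ex_nth [simp]: "ex c $ n = smult (1 / fact n) (c ^ n)" by (simp add: ex_def)

lemma ex_deriv: "fps_deriv (ex c) = fps_const c * ex c"
proof (rule fps_ext)
  fix n
  show "fps_deriv (ex c) $ n = (fps_const c * ex c) $ n"
    by (rule poly_ext) (simp add: ofnat_mult_poly field_simps del: of_nat_Suc)
qed

lemma ex_Dx: "Dx (ex c) = fps_const (pderiv c) * (fps_X * ex c)"
proof (rule fps_ext)
  fix n
  show "Dx (ex c) $ n = (fps_const (pderiv c) * (fps_X * ex c)) $ n"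
  proof (cases n)
    case 0 then show ?thesis by simp
  next
    case (Suc k)
    show ?thesis unfolding Suc by (rule poly_ext) (simp add: pderiv_smult pderiv_power_Suc field_simps del: of_nat_Suc power_Suc)
  qed
qed

lemma M_ex: "M (ex c) = fps_const c * ex c - fps_const ([:0,2:] * c + K * pderiv c) * (fps_X * ex c)"
  by (simp add: M_def ex_deriv ex_Dx algebra_simps fps_const_add[symmetric] fps_const_mult[symmetric] del: fps_const_add fps_const_mult)


lemma fc_num: "fps_const [:numeral k:] = (numeral k :: real poly fps)"
  by (simp add: fps_numeral_fps_const numeral_poly)

lemma K_Y: "fps_const K = 2 * Y - 2 * Y^2"
proof -
  have "K = [:0,2:] - [:0,0,2:]" unfolding K_def by simp
  then have "fps_const K = fps_const [:0,2:] - fps_const [:0,0,2:]" by (simp only: fps_const_sub)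
  moreover have "fps_const [:0,0,2:] = 2 * Y^2"
  proof -
    have "[:0,0,2:] = [:2:] * ([:0,1:] * [:0,1::real:])" by simp
    then have "fps_const [:0,0,2:] = fps_const [:2:] * (Y * Y)" by (simp only: fps_const_mult)
    then show ?thesis by (simp only: fc_num power2_eq_square)
  qed
  moreover have "fps_const [:0,2:] = 2 * Y"
  proof -
    have "[:0,2:] = [:2:] * [:0,1::real:]" by simp
    then have "fps_const [:0,2:] = fps_const [:2:] * Y" by (simp only: fps_const_mult)
    then show ?thesis by (simp only: fc_num)
  qed
  ultimately show ?thesis by simp
qed

lemma cnumY: "fps_const [:0, numeral k:] = numeral k * Y"
proof -
  have "[:0, numeral k:] = [:numeral k:] * [:0,1::real:]" by simp
  then have "fps_const [:0, numeral k:] = fps_const [:numeral k:] * Y" by (simp only: fps_const_mult)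
  then show ?thesis by (simp only: fc_num)
qed

lemma ME1: "M (ex [:0,2:]) = (2*Y - 4*Y*fps_X) * ex [:0,2:]"
proof -
  have e: "[:0,2:] * [:0,2:] + K * pderiv [:0,2:] = [:0,4::real:]" unfolding K_def by (simp add: pderiv_pCons)
  have "M (ex [:0,2:]) = fps_const [:0,2:] * ex [:0,2:] - fps_const [:0,4:] * (fps_X * ex [:0,2:])"
    unfolding M_ex e ..
  then show ?thesis by (simp only: cnumY) (simp add: algebra_simps)
qed

lemma ME2: "M (ex [:2:]) = (2 - 4*Y*fps_X) * ex [:2:]"
proof -
  have e: "[:0,2:] * [:2:] + K * pderiv [:2:] = [:0,4::real:]" unfolding K_def by (simp add: pderiv_pCons)
  have "M (ex [:2:]) = fps_const [:2:] * ex [:2:] - fps_const [:0,4:] * (fps_X * ex [:2:])"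
    unfolding M_ex e ..
  then show ?thesis by (simp only: cnumY fc_num) (simp add: algebra_simps)
qed

lemma ME3: "M (ex [:0,1:]) = (Y - 2*Y*fps_X) * ex [:0,1:]"
proof -
  have e: "[:0,2:] * [:0,1:] + K * pderiv [:0,1:] = [:0,2::real:]" unfolding K_def by (simp add: pderiv_pCons)
  have "M (ex [:0,1:]) = Y * ex [:0,1:] - fps_const [:0,2:] * (fps_X * ex [:0,1:])"
    unfolding M_ex e ..
  then show ?thesis by (simp only: cnumY) (simp add: algebra_simps)
qed

lemma MY: "M Y = 2 * Y^2 - 2 * Y"
proof -
  have "pderiv [:0,1::real:] = 1" by (simp add: pderiv_pCons)
  then have "M Y = - fps_const K" using M_const[of "[:0,1:]"] by simp
  then show ?thesis using K_Y by simp
qed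

lemma M1: "M 1 = 0"
  using M_const[of 1] by simp

definition Dser :: "real poly fps" where "Dser = Abs_fps (\<lambda>n. smult (1 / fact n) (P n))"

lemma Dser_nth [simp]: "Dser $ n = smult (1 / fact n) (P n)" by (simp add: Dser_def)

lemma MD: "M Dser = Y * (1 + 2 * fps_X) * Dser"
proof -
  have r: "Y * (1 + 2 * fps_X) * Dser = Y * Dser + fps_const [:0,2:] * (fps_X * Dser)"
    by (simp only: cnumY) (simp add: algebra_simps)
  have "M Dser $ n = (Y * Dser + fps_const [:0,2:] * (fps_X * Dser)) $ n" for n
  proof (cases n)
    case 0 then show ?thesis by (simp add: M_def)
  next
    case (Suc k)
    show ?thesis unfolding Suc M_def fps_sub_nth fps_add_nth fps_mult_left_const_nth fps_X_mult_nth
      by (rule poly_ext) (simp add: K_def ofnat_mult_poly pderiv_smult field_simps del: of_nat_Suc)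
  qed
  then show ?thesis unfolding r by (simp add: fps_eq_iff)
qed

lemma M_uniq:
  assumes h: "M G = Y * (3 - 2 * fps_X) * G" and g0: "G $ 0 = 0"
  shows "G = 0"
proof -
  have r: "Y * (3 - 2 * fps_X) * G = fps_const [:0,3:] * G - fps_const [:0,2:] * (fps_X * G)"
    by (simp only: cnumY) (simp add: algebra_simps)
  have "G $ n = 0" for n
  proof (induction n rule: less_induct)
    case (less n)
    show ?case
    proof (cases n)
      case 0 then show ?thesis using g0 by simp
    next
      case (Suc k)
      have IHk: "G $ k = 0" using less Suc by simp
      have IHk1: "G $ (k - 1) = 0" using less Suc by simp
      have "M G $ k = (fps_const [:0,3:] * G - fps_const [:0,2:] * (fps_X * G)) $ k" using h r by simp
      then have "of_nat (Suc k) * G $ Suc k = 0"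
        unfolding M_def fps_sub_nth fps_add_nth fps_mult_left_const_nth fps_X_mult_nth fps_deriv_nth Dx_nth
        using IHk IHk1 by (simp split: if_splits)
      then show ?thesis using Suc by (simp add: of_nat_poly del: of_nat_Suc)
    qed
  qed
  then show ?thesis by (simp add: fps_eq_iff)
qed

definition Eser :: "real poly fps" where "Eser = ex [:0,2:] - Y * ex [:2:]"
definition Qser :: "real poly fps" where "Qser = (1 - Y) * ex [:0,1:]"

lemma ME: "M Eser = 2 * Y * (1 - 2 * fps_X) * Eser"
  unfolding Eser_def M_diff M_mult ME1 ME2 MY by (simp add: algebra_simps power2_eq_square)

lemma MQ: "M Qser = Y * (3 - 2 * fps_X) * Qser"
  unfolding Qser_def M_diff M_mult ME3 MY M1
  by (simp add: algebra_simps power2_eq_square del: fps_const_mult fps_const_add fps_const_sub fps_const_neg)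

lemma EDQ: "Eser * Dser = Qser"
proof -
  define G where "G = Eser * Dser - Qser"
  have "M G = Y * (3 - 2 * fps_X) * G"
    unfolding G_def M_diff M_mult ME MQ MD by (simp add: algebra_simps)
  moreover have "G $ 0 = 0" unfolding G_def Eser_def Qser_def by (simp add: fps_mult_nth one_pCons)
  ultimately have "G = 0" by (rule M_uniq)
  then show ?thesis unfolding G_def by simp
qed



definition evf :: "real \<Rightarrow> real poly fps \<Rightarrow> real fps" where
  "evf x F = Abs_fps (\<lambda>n. poly (F $ n) x)"

lemma evf_nth [simp]: "evf x F $ n = poly (F $ n) x" by (simp add: evf_def)

lemma evf_mult: "evf x (F * G) = evf x F * evf x G"
  by (simp add: fps_eq_iff fps_mult_nth poly_sum)
lemma evf_diff: "evf x (F - G) = evf x F - evf x G"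
  by (simp add: fps_eq_iff)
lemma evf_const: "evf x (fps_const c) = fps_const (poly c x)"
  by (simp add: fps_eq_iff)
lemma evf_one: "evf x 1 = 1"
  by (simp add: fps_eq_iff)
lemma evf_ex: "evf x (ex c) = fps_exp (poly c x)"
  by (simp add: fps_eq_iff)

definition Dx_ser :: "real \<Rightarrow> real fps" where
  "Dx_ser x = Abs_fps (\<lambda>n. poly (P n) x / fact n)"

lemma evf_D: "evf x Dser = Dx_ser x"
  by (simp add: fps_eq_iff Dx_ser_def)

lemma ED_eval: "(fps_exp (2 * x) - fps_const x * fps_exp 2) * Dx_ser x = fps_const (1 - x) * fps_exp x"
proof -
  have "evf x (Eser * Dser) = evf x Qser" using EDQ by simp
  then show ?thesis
    unfolding Eser_def Qser_def evf_mult evf_diff evf_const evf_ex evf_D evf_one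
    by (simp add: mult.commute)
qed

definition sc :: "real \<Rightarrow> real fps \<Rightarrow> real fps" where
  "sc c F = Abs_fps (\<lambda>n. c ^ n * F $ n)"

lemma sc_mult: "sc c (F * G) = sc c F * sc c G"
proof (rule fps_ext)
  fix n
  have "sc c (F * G) $ n = (\<Sum>i=0..n. c ^ n * (F $ i * G $ (n - i)))"
    by (simp add: sc_def fps_mult_nth sum_distrib_left)
  also have "\<dots> = (\<Sum>i=0..n. (c ^ i * F $ i) * (c ^ (n - i) * G $ (n - i)))"
    by (rule sum.cong) (auto simp: power_add[symmetric] algebra_simps)
  finally show "sc c (F * G) $ n = (sc c F * sc c G) $ n" by (simp add: sc_def fps_mult_nth)
qed
lemma sc_diff: "sc c (F - G) = sc c F - sc c G" by (simp add: sc_def fps_eq_iff algebra_simps)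
lemma sc_const: "sc c (fps_const a) = fps_const a" by (simp add: sc_def fps_eq_iff)
lemma sc_exp: "sc c (fps_exp a) = fps_exp (c * a)" by (simp add: sc_def fps_eq_iff power_mult_distrib)

lemma D_egf_prod:
  "(fps_exp (2 * x) - fps_const x * fps_exp 2) * Dx_ser x = fps_const (1 - x) * fps_exp x"
  by (rule ED_eval)



lemma degree_P: "degree (P n) \<le> n"
proof (induction n rule: P.induct)
  case 1 then show ?case by simp
next
  case 2 then show ?case by simp
next
  case (3 n)
  have a: "degree (smult (2 * real (Suc n) + 1) ([:0,1:] * P (Suc n))) \<le> Suc (Suc n)"
    by (rule order.trans[OF degree_smult_le]) (use 3 degree_mult_le[of "[:0,1:]" "P (Suc n)"] in simp)
  have b: "degree ([:0,2,-2:] * pderiv (P (Suc n))) \<le> Suc (Suc n)"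
    using degree_mult_le[of "[:0,2,-2:]" "pderiv (P (Suc n))"] degree_pderiv[of "P (Suc n)"] 3 by simp
  have c: "degree (smult (2 * real (Suc n)) ([:0,1:] * P n)) \<le> Suc (Suc n)"
    by (rule order.trans[OF degree_smult_le]) (use 3 degree_mult_le[of "[:0,1:]" "P n"] in simp)
  show ?case by (simp only: P.simps) (intro degree_add_le a b c)
qed

definition ds :: "nat \<Rightarrow> real poly" where
  "ds n = monom 1 (Suc n - degree (P n)) * reflect_poly (P n)"

lemma poly_ds: "x \<noteq> 0 \<Longrightarrow> poly (ds n) x = x ^ Suc n * poly (P n) (1 / x)"
proof -
  assume x: "x \<noteq> 0"
  have "poly (ds n) x = x ^ (Suc n - degree (P n)) * (x ^ degree (P n) * poly (P n) (inverse x))"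
    unfolding ds_def by (simp add: poly_monom poly_reflect_poly_nz[OF x])
  also have "\<dots> = x ^ Suc n * poly (P n) (1 / x)"
    using degree_P[of n] by (simp add: mult.assoc[symmetric] power_add[symmetric] inverse_eq_divide)
  finally show ?thesis .
qed

lemma poly_ds0: "poly (ds n) 0 = 0"
  using degree_P[of n] unfolding ds_def by (simp add: poly_monom)

definition pp :: "nat \<Rightarrow> real poly" where "pp n = (ds n - P n) div [:-1,1:]"
definition qq :: "nat \<Rightarrow> real poly" where "qq n = P n - pp n"

lemma pp_eq: "[:-1,1:] * pp n = ds n - P n"
proof -
  have "poly (ds n - P n) 1 = 0" using poly_ds[of 1 n] by simp
  then have "[:-1,1:] dvd (ds n - P n)" using poly_eq_0_iff_dvd[of "ds n - P n" 1] by simp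
  then show ?thesis unfolding pp_def by (rule dvd_mult_div_cancel)
qed

lemma pp_rel: "(x - 1) * poly (pp n) x = poly (ds n) x - poly (P n) x"
proof -
  have "poly ([:-1,1:] * pp n) x = poly (ds n - P n) x" using pp_eq by simp
  then show ?thesis by (simp add: algebra_simps)
qed

lemma pp_sym: "x \<noteq> 0 \<Longrightarrow> poly (pp n) x = x ^ n * poly (pp n) (1 / x)"
proof -
  assume x: "x \<noteq> 0"
  show ?thesis
  proof (cases "x = 1")
    case True then show ?thesis by simp
  next
    case False
    have r1: "(x - 1) * poly (pp n) x = x ^ Suc n * poly (P n) (1 / x) - poly (P n) x"
      using pp_rel[of x n] poly_ds[OF x] by simp
    have x': "1 / x \<noteq> 0" using x by simp
    have r2: "(1 / x - 1) * poly (pp n) (1 / x) = (1 / x) ^ Suc n * poly (P n) x - poly (P n) (1 / x)"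
      using pp_rel[of "1/x" n] poly_ds[OF x'] by simp
    define a where "a = poly (pp n) (1 / x)"
    define b where "b = poly (P n) x"
    define c where "c = poly (P n) (1 / x)"
    define u where "u = x ^ n"
    have xs: "x ^ Suc n = x * u" unfolding u_def by simp
    have e1: "x * u * (1 / x - 1) = u * (1 - x)" using x by (simp add: field_simps)
    have e2: "x * u * (1 / x) ^ Suc n = 1" unfolding u_def using x by (simp add: power_one_over field_simps)
    have r2': "(1 / x - 1) * a = (1 / x) ^ Suc n * b - c" using r2 unfolding a_def b_def c_def .
    have "u * (1 - x) * a = (x * u * (1 / x - 1)) * a" by (simp only: e1)
    also have "\<dots> = x * u * ((1 / x - 1) * a)" by (simp only: mult.assoc)
    also have "\<dots> = x * u * ((1 / x) ^ Suc n * b - c)" using r2' by simp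
    also have "\<dots> = (x * u * (1 / x) ^ Suc n) * b - x * u * c" by (simp add: algebra_simps)
    also have "\<dots> = b - x * u * c" using e2 by simp
    finally have h: "u * (1 - x) * a = b - x * u * c" .
    have r1': "(x - 1) * poly (pp n) x = x * u * c - b" using r1 xs unfolding b_def c_def by simp
    have "(1 - x) * (u * a) = (1 - x) * poly (pp n) x" using h r1' by (simp add: algebra_simps)
    then have "u * a = poly (pp n) x" using False by simp
    then show ?thesis unfolding u_def a_def by simp
  qed
qed

lemma qq_sym: "x \<noteq> 0 \<Longrightarrow> poly (qq n) x = x ^ (n + 1) * poly (qq n) (1 / x)"
proof -
  assume x: "x \<noteq> 0"
  have r1: "(x - 1) * poly (pp n) x = x ^ Suc n * poly (P n) (1 / x) - poly (P n) x"
    using pp_rel[of x n] poly_ds[OF x] by simp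
  have s: "x ^ n * poly (pp n) (1 / x) = poly (pp n) x" using pp_sym[OF x] by simp
  have "x ^ (n + 1) * poly (qq n) (1 / x) = x ^ Suc n * poly (P n) (1 / x) - x * (x ^ n * poly (pp n) (1 / x))"
    unfolding qq_def by (simp add: algebra_simps)
  also have "\<dots> = poly (qq n) x" using r1 s unfolding qq_def by (simp add: algebra_simps)
  finally show ?thesis by simp
qed

lemma poly_zero_off01:
  assumes "\<And>x. x \<noteq> 0 \<Longrightarrow> x \<noteq> 1 \<Longrightarrow> poly r x = (0::real)"
  shows "r = 0"
proof (rule ccontr)
  assume "r \<noteq> 0"
  then have "finite {x. poly r x = 0}" by (rule poly_roots_finite)
  moreover have "UNIV - {0, 1} \<subseteq> {x. poly r x = 0}" using assms by auto
  ultimately have "finite (UNIV - {0, 1::real})" by (rule finite_subset[rotated])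
  then have "finite (UNIV :: real set)" by simp
  then show False using infinite_UNIV_char_0[where 'a=real] by simp
qed

lemma fpm_eq: "fpm n = (pp n, qq n)"
  unfolding fpm_def
proof (rule the_equality)
  show "case (pp n, qq n) of (p, q) \<Rightarrow> dB n = p + q
      \<and> (\<forall>x::real. x \<noteq> 0 \<longrightarrow> poly p x = x ^ n * poly p (1 / x))
      \<and> (\<forall>x::real. x \<noteq> 0 \<longrightarrow> poly q x = x ^ (n + 1) * poly q (1 / x))"
  proof (simp only: prod.case, intro conjI)
    show "dB n = pp n + qq n" by (simp add: dB_P qq_def)
    show "\<forall>x::real. x \<noteq> 0 \<longrightarrow> poly (pp n) x = x ^ n * poly (pp n) (1 / x)" using pp_sym by blast
    show "\<forall>x::real. x \<noteq> 0 \<longrightarrow> poly (qq n) x = x ^ (n + 1) * poly (qq n) (1 / x)" using qq_sym by blast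
  qed
next
  fix z assume z: "case z of (p, q) \<Rightarrow> dB n = p + q
      \<and> (\<forall>x::real. x \<noteq> 0 \<longrightarrow> poly p x = x ^ n * poly p (1 / x))
      \<and> (\<forall>x::real. x \<noteq> 0 \<longrightarrow> poly q x = x ^ (n + 1) * poly q (1 / x))"
  obtain p q where zpq: "z = (p, q)" by (cases z)
  have d: "P n = p + q" and sp: "\<And>x. x \<noteq> 0 \<Longrightarrow> poly p x = x ^ n * poly p (1 / x)"
    and sq: "\<And>x. x \<noteq> 0 \<Longrightarrow> poly q x = x ^ (n + 1) * poly q (1 / x)"
  proof -
    have zz: "dB n = p + q
      \<and> (\<forall>x::real. x \<noteq> 0 \<longrightarrow> poly p x = x ^ n * poly p (1 / x))
      \<and> (\<forall>x::real. x \<noteq> 0 \<longrightarrow> poly q x = x ^ (n + 1) * poly q (1 / x))"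
      using z unfolding zpq prod.case by assumption
    show "P n = p + q" using zz[THEN conjunct1] dB_P by simp
    show "\<And>x. x \<noteq> 0 \<Longrightarrow> poly p x = x ^ n * poly p (1 / x)" using zz by blast
    show "\<And>x. x \<noteq> 0 \<Longrightarrow> poly q x = x ^ (n + 1) * poly q (1 / x)" using zz by blast
  qed
  define r where "r = p - pp n"
  have rq: "q - qq n = - r" unfolding r_def qq_def using d by (simp add: algebra_simps)
  have "r = 0"
  proof (rule poly_zero_off01)
    fix x :: real assume x0: "x \<noteq> 0" and x1: "x \<noteq> 1"
    have a: "poly r x = x ^ n * poly r (1 / x)" unfolding r_def using sp[OF x0] pp_sym[OF x0] by (simp add: algebra_simps)
    have "poly (q - qq n) x = x ^ (n + 1) * poly (q - qq n) (1 / x)" using sq[OF x0] qq_sym[OF x0] by (simp add: algebra_simps)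
    then have b: "poly r x = x * (x ^ n * poly r (1 / x))" unfolding rq by simp
    have "(1 - x) * poly r x = 0" using a b by (simp add: algebra_simps)
    then show "poly r x = 0" using x1 by simp
  qed
  then show "z = (pp n, qq n)" using zpq rq unfolding r_def by simp
qed

lemma fplus_eq: "fplus n = pp n" and fminus_eq: "fminus n = qq n"
  by (simp_all add: fplus_def fminus_def fpm_eq)



lemma aux_coeff:
  fixes x A B C f :: real
  assumes "(x - 1) * A = x * B - C" "x \<noteq> 1" "f \<noteq> 0"
  shows "A / f = 1 / (x - 1) * (x * (B / f) - C / f)"
proof -
  have xm: "x - 1 \<noteq> 0" using assms by simp
  have "1 / (x - 1) * (x * (B / f) - C / f) = (x * B - C) / ((x - 1) * f)"
    using xm assms(3) by (simp add: field_simps)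
  also have "\<dots> = ((x - 1) * A) / ((x - 1) * f)" using assms(1) by simp
  also have "\<dots> = A / f" using xm by simp
  finally show ?thesis by simp
qed

lemma key_plus:
  fixes x :: real
  assumes x1: "x \<noteq> 1"
  shows "Abs_fps (\<lambda>n. poly (pp n) x / fact n) * (fps_exp (2 * x) - fps_const x * fps_exp 2)
       = fps_exp x - fps_const x * fps_exp 1"
proof (cases "x = 0")
  case True
  have "poly (pp n) 0 = poly (P n) 0" for n using pp_rel[of 0 n] poly_ds0[of n] by simp
  then have "Abs_fps (\<lambda>n. poly (pp n) x / fact n) = Dx_ser 0" using True by (simp add: Dx_ser_def)
  moreover have "(fps_exp (2 * 0) - fps_const 0 * fps_exp 2) * Dx_ser 0 = fps_const (1 - 0) * fps_exp 0"
    by (rule D_egf_prod)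
  ultimately show ?thesis using True by (simp add: mult.commute)
next
  case False
  define Ex where "Ex = fps_exp (2 * x) - fps_const x * fps_exp 2"
  define Dxs where "Dxs = Dx_ser x"
  define Z where "Z = sc x (Dx_ser (1 / x))"
  have ED: "Ex * Dxs = fps_const (1 - x) * fps_exp x" unfolding Ex_def Dxs_def by (rule D_egf_prod)
  have "sc x ((fps_exp (2 * (1 / x)) - fps_const (1 / x) * fps_exp 2) * Dx_ser (1 / x))
      = sc x (fps_const (1 - 1 / x) * fps_exp (1 / x))" using D_egf_prod[of "1 / x"] by simp
  then have EZ0: "(fps_exp 2 - fps_const (1 / x) * fps_exp (2 * x)) * Z = fps_const (1 - 1 / x) * fps_exp 1"
    unfolding sc_mult sc_diff sc_const sc_exp Z_def using False by (simp add: mult.commute)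
  have Exf: "Ex = fps_const (- x) * (fps_exp 2 - fps_const (1 / x) * fps_exp (2 * x))"
    unfolding Ex_def using False by (simp add: fps_eq_iff field_simps)
  have EZ: "Ex * Z = fps_const (1 - x) * fps_exp 1"
  proof -
    have "Ex * Z = fps_const (- x) * ((fps_exp 2 - fps_const (1 / x) * fps_exp (2 * x)) * Z)"
      unfolding Exf by (simp only: mult.assoc)
    also have "\<dots> = fps_const (- x) * (fps_const (1 - 1 / x) * fps_exp 1)" unfolding EZ0 ..
    also have "\<dots> = fps_const (1 - x) * fps_exp 1" using False by (simp add: fps_eq_iff field_simps)
    finally show ?thesis .
  qed
  have Fp: "Abs_fps (\<lambda>n. poly (pp n) x / fact n) = fps_const (1 / (x - 1)) * (fps_const x * Z - Dxs)"
  proof (rule fps_ext)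
    fix n
    have r: "(x - 1) * poly (pp n) x = x ^ Suc n * poly (P n) (1 / x) - poly (P n) x"
      using pp_rel[of x n] poly_ds[OF False] by simp
    have r': "(x - 1) * poly (pp n) x = x * (x ^ n * poly (P n) (1 / x)) - poly (P n) x" using r by simp
    show "Abs_fps (\<lambda>n. poly (pp n) x / fact n) $ n = (fps_const (1 / (x - 1)) * (fps_const x * Z - Dxs)) $ n"
      unfolding Z_def Dxs_def using aux_coeff[OF r' x1, of "fact n"] by (simp add: sc_def Dx_ser_def)
  qed
  have "Abs_fps (\<lambda>n. poly (pp n) x / fact n) * Ex = fps_const (1 / (x - 1)) * (fps_const x * (Ex * Z) - Ex * Dxs)"
    unfolding Fp by (simp add: algebra_simps)
  also have "\<dots> = fps_const (1 / (x - 1)) * (fps_const x * (fps_const (1 - x) * fps_exp 1) - fps_const (1 - x) * fps_exp x)"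
    unfolding EZ ED ..
  also have "\<dots> = (fps_const (1 / (x - 1)) * fps_const (1 - x)) * (fps_const x * fps_exp 1 - fps_exp x)"
    by (simp add: algebra_simps del: fps_const_mult fps_const_add fps_const_sub fps_const_neg)
  also have "\<dots> = fps_exp x - fps_const x * fps_exp 1"
  proof -
    have c: "1 / (x - 1) * (1 - x) = -1" using x1 by (simp add: field_simps)
    have m1: "fps_const (-1::real) = -1" by (simp add: fps_eq_iff)
    have h: "fps_const (1 / (x - 1)) * fps_const (1 - x) = -1" by (simp only: fps_const_mult c m1)
    show ?thesis unfolding h by (simp only: mult_minus_left mult_1_left minus_diff_eq)
  qed
  finally show ?thesis unfolding Ex_def .
qed

theorem proposition3p2:
  fixes x :: real
  assumes "x \<noteq> 1"
  shows "Abs_fps (\<lambda>n. poly (fplus n) x / fact n)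
           = (fps_exp x - fps_const x * fps_exp 1)
             / (fps_exp (2 * x) - fps_const x * fps_exp 2)
         \<and> Abs_fps (\<lambda>n. poly (fminus n) x / fact n)
           = fps_const x * (fps_exp 1 - fps_exp x)
             / (fps_exp (2 * x) - fps_const x * fps_exp 2)"
proof -
  define Ex where "Ex = fps_exp (2 * x) - fps_const x * fps_exp 2"
  have Ex0: "Ex \<noteq> 0"
  proof
    assume "Ex = 0"
    then have "Ex $ 0 = 0" by simp
    then show False using assms unfolding Ex_def by simp
  qed
  define Fp where "Fp = Abs_fps (\<lambda>n. poly (pp n) x / fact n)"
  define Fm where "Fm = Abs_fps (\<lambda>n. poly (qq n) x / fact n)"
  have kp: "Fp * Ex = fps_exp x - fps_const x * fps_exp 1"
    unfolding Fp_def Ex_def using key_plus[OF assms] .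
  have FmD: "Fm = Dx_ser x - Fp"
    unfolding Fm_def Fp_def Dx_ser_def qq_def by (simp add: fps_eq_iff diff_divide_distrib)
  have km: "Fm * Ex = fps_const x * (fps_exp 1 - fps_exp x)"
  proof -
    have "Fm * Ex = Ex * Dx_ser x - Fp * Ex" unfolding FmD by (simp add: algebra_simps)
    also have "\<dots> = fps_const (1 - x) * fps_exp x - (fps_exp x - fps_const x * fps_exp 1)"
      unfolding kp unfolding Ex_def D_egf_prod ..
    also have "\<dots> = fps_const x * (fps_exp 1 - fps_exp x)" by (simp add: fps_eq_iff field_simps)
    finally show ?thesis .
  qed
  have "Fp = (fps_exp x - fps_const x * fps_exp 1) / Ex"
    using fps_divide_times_eq[OF Ex0, of Fp] kp by simp
  moreover have "Fm = fps_const x * (fps_exp 1 - fps_exp x) / Ex"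
    using fps_divide_times_eq[OF Ex0, of Fm] km by simp
  ultimately show ?thesis unfolding Fp_def Fm_def Ex_def fplus_eq fminus_eq by simp
qed


end
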